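(* Let $\mathbb{F}$ be a field, $n\in\mathbb{N}$, $W$ a linear subspace of $\mathbb{F}^n$ and $v\in\mathbb{F}^n$. Then $(M(W)/^\bullet v)^*=M(W)^*\setminus^{\bullet} v$, that is, the dual of the matroid $M(W\cap\mathrm{span}(v)^\perp)$ equals $M(\mathrm{span}(W^\perp\cup\{v\}))$.
   Context: For $x,y\in\mathbb{F}^n$, $x\cdot y=\sum_i x_iy_i$, and for a subspace $U$, $U^\perp=\{x: x\cdot u=0\ \forall u\in U\}$. For a subspace $W\subseteq\mathbb{F}^n$, $M(W)$ is the matroid on ground set $\{1,\dots,n\}$ defined as the column matroid of a matrix whose rows form a basis of $W$ (a set of indices is independent iff the corresponding columns are linearly independent; this does not depend on the basis chosen). Contraction$^\bullet$: $M(W)/^\bullet v:=M(W\cap\mathrm{span}(v)^\perp)$. Deletion$^\bullet$: $M(W)\setminus^\bullet v:=M(\mathrm{span}(W\cup\{v\}))$, and $M(W)^*\setminus^\bullet v$ means $M(W^\perp)\setminus^\bullet v$. $M^*$ denotes the dual matroid (independent sets: sets disjoint from some basis of $M$). *)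

theory Defs
  imports Main
begin

text \<open>Vectors of F^n are represented as functions nat => F vanishing outside {0..<n};
  coordinate i (0-based) corresponds to coordinate i+1 of the paper.
  The ground set {1..n} of the paper is represented as {0..<n}.\<close>

definition vecs :: "nat \<Rightarrow> (nat \<Rightarrow> 'a::field) set" where
  "vecs n = {x. \<forall>i\<ge>n. x i = 0}"

definition dotp :: "nat \<Rightarrow> (nat \<Rightarrow> 'a::field) \<Rightarrow> (nat \<Rightarrow> 'a) \<Rightarrow> 'a" where
  "dotp n x y = (\<Sum>i<n. x i * y i)"

definition is_subspace :: "nat \<Rightarrow> (nat \<Rightarrow> 'a::field) set \<Rightarrow> bool" where
  "is_subspace n W \<longleftrightarrow> W \<subseteq> vecs n \<and> (\<lambda>_. 0) \<in> W \<and>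
     (\<forall>x\<in>W. \<forall>y\<in>W. (\<lambda>i. x i + y i) \<in> W) \<and>
     (\<forall>c. \<forall>x\<in>W. (\<lambda>i. c * x i) \<in> W)"

definition spanv :: "nat \<Rightarrow> (nat \<Rightarrow> 'a::field) set \<Rightarrow> (nat \<Rightarrow> 'a) set" where
  "spanv n S = \<Inter>{U. is_subspace n U \<and> S \<subseteq> U}"

definition perp :: "nat \<Rightarrow> (nat \<Rightarrow> 'a::field) set \<Rightarrow> (nat \<Rightarrow> 'a) set" where
  "perp n U = {x \<in> vecs n. \<forall>u\<in>U. dotp n x u = 0}"

definition lin_indep_list :: "(nat \<Rightarrow> 'a::field) list \<Rightarrow> bool" where
  "lin_indep_list bs \<longleftrightarrow>
     (\<forall>c. (\<lambda>i. \<Sum>j<length bs. c j * (bs ! j) i) = (\<lambda>_. 0) \<longrightarrow> (\<forall>j<length bs. c j = 0))"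

definition is_basis_list :: "nat \<Rightarrow> (nat \<Rightarrow> 'a::field) set \<Rightarrow> (nat \<Rightarrow> 'a) list \<Rightarrow> bool" where
  "is_basis_list n W bs \<longleftrightarrow> set bs \<subseteq> vecs n \<and> lin_indep_list bs \<and> spanv n (set bs) = W"

text \<open>Column matroid of the matrix whose rows are bs (an k x n matrix, k = length bs):
  I is independent iff I is a set of column indices and the columns indexed by I
  are linearly independent in F^k.\<close>
definition col_indep :: "nat \<Rightarrow> (nat \<Rightarrow> 'a::field) list \<Rightarrow> nat set \<Rightarrow> bool" where
  "col_indep n bs I \<longleftrightarrow> I \<subseteq> {0..<n} \<and>
     (\<forall>c. (\<forall>j<length bs. (\<Sum>i\<in>I. c i * (bs ! j) i) = 0) \<longrightarrow> (\<forall>i\<in>I. c i = 0))"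

text \<open>M(W): the column matroid of a matrix whose rows form a basis of W
  (a basis chosen by Hilbert choice), given by its independence predicate.\<close>
definition matroid_of :: "nat \<Rightarrow> (nat \<Rightarrow> 'a::field) set \<Rightarrow> nat set \<Rightarrow> bool" where
  "matroid_of n W = col_indep n (SOME bs. is_basis_list n W bs)"

definition matroid_basis :: "nat set \<Rightarrow> (nat set \<Rightarrow> bool) \<Rightarrow> nat set \<Rightarrow> bool" where
  "matroid_basis E ind B \<longleftrightarrow> B \<subseteq> E \<and> ind B \<and>
     (\<forall>X. X \<subseteq> E \<and> ind X \<and> B \<subseteq> X \<longrightarrow> X = B)"

definition dual_matroid :: "nat set \<Rightarrow> (nat set \<Rightarrow> bool) \<Rightarrow> nat set \<Rightarrow> bool" where
  "dual_matroid E ind I \<longleftrightarrow> I \<subseteq> E \<and> (\<exists>B. matroid_basis E ind B \<and> I \<inter> B = {})"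

definition contract_bullet :: "nat \<Rightarrow> (nat \<Rightarrow> 'a::field) set \<Rightarrow> (nat \<Rightarrow> 'a) \<Rightarrow> nat set \<Rightarrow> bool" where
  "contract_bullet n W v = matroid_of n (W \<inter> perp n (spanv n {v}))"

definition delete_bullet :: "nat \<Rightarrow> (nat \<Rightarrow> 'a::field) set \<Rightarrow> (nat \<Rightarrow> 'a) \<Rightarrow> nat set \<Rightarrow> bool" where
  "delete_bullet n W v = matroid_of n (spanv n (W \<union> {v}))"

end

theory Submission
  imports Defs
begin

definition nind :: "nat \<Rightarrow> (nat \<Rightarrow> 'a::field) set \<Rightarrow> nat set \<Rightarrow> bool" where
  "nind n C J \<longleftrightarrow> J \<subseteq> {0..<n} \<and> (\<forall>x\<in>C. (\<forall>i. i \<notin> J \<longrightarrow> x i = 0) \<longrightarrow> x = (\<lambda>_. 0))"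

lemma dotp_comm: "dotp n x y = dotp n y x"
  unfolding dotp_def by (simp add: mult.commute)

lemma dotp_add1: "dotp n (\<lambda>i. x i + y i) u = dotp n x u + dotp n y u"
  unfolding dotp_def by (simp add: distrib_right sum.distrib)

lemma dotp_scale1: "dotp n (\<lambda>i. c * x i) u = c * dotp n x u"
  unfolding dotp_def by (simp add: sum_distrib_left mult.assoc)

lemma dotp_add2: "dotp n u (\<lambda>i. x i + y i) = dotp n u x + dotp n u y"
  unfolding dotp_def by (simp add: distrib_left sum.distrib)

lemma dotp_scale2: "dotp n u (\<lambda>i. c * x i) = c * dotp n u x"
  unfolding dotp_def by (simp add: sum_distrib_left mult.left_commute)

lemma dotp_diff2: "dotp n u (\<lambda>i. x i - c * y i) = dotp n u x - c * dotp n u y"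
  unfolding dotp_def by (simp add: sum_distrib_left mult.left_commute right_diff_distrib sum_subtractf)

lemma dotp_zero2[simp]: "dotp n u (\<lambda>_. 0) = 0"
  unfolding dotp_def by simp

lemma dotp_Suc: "dotp (Suc n) x y = dotp n x y + x n * y n"
  unfolding dotp_def by simp

lemma dotp_single:
  assumes "j < n" "\<And>l. l < n \<Longrightarrow> l \<noteq> j \<Longrightarrow> y l * x l = 0"
  shows "dotp n y x = y j * x j"
proof -
  have "dotp n y x = y j * x j + (\<Sum>l\<in>{..<n} - {j}. y l * x l)"
    unfolding dotp_def using assms(1) by (simp add: sum.remove)
  also have "(\<Sum>l\<in>{..<n} - {j}. y l * x l) = 0"
    using assms(2) by (intro sum.neutral) auto
  finally show ?thesis by simp
qed

lemma vecs_Suc_mono: "vecs n \<subseteq> vecs (Suc n)"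
  unfolding vecs_def by auto

lemma subspace_Suc: "is_subspace n U \<Longrightarrow> is_subspace (Suc n) U"
  unfolding is_subspace_def using vecs_Suc_mono by blast

lemma dotp_zero1[simp]: "dotp n (\<lambda>_. 0) u = 0"
  unfolding dotp_def by simp

lemma perp_subspace: "is_subspace n (perp n S)"
  unfolding is_subspace_def perp_def vecs_def
  by (auto simp: dotp_add1 dotp_scale1)

lemma spanv_least: "is_subspace n V \<Longrightarrow> S \<subseteq> V \<Longrightarrow> spanv n S \<subseteq> V"
  unfolding spanv_def by auto

lemma spanv_sup: "S \<subseteq> spanv n S"
  unfolding spanv_def by auto

lemma vecs_subspace: "is_subspace n (vecs n)"
  unfolding is_subspace_def vecs_def by auto

lemma spanv_subspace: assumes "S \<subseteq> vecs n" shows "is_subspace n (spanv n S)"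
proof -
  have ne: "vecs n \<in> {U. is_subspace n U \<and> S \<subseteq> U}" using assms vecs_subspace by auto
  let ?F = "{U. is_subspace n U \<and> S \<subseteq> U}"
  have 1: "\<Inter>?F \<subseteq> vecs n" using ne by auto
  have 2: "(\<lambda>_. 0) \<in> \<Inter>?F" by (auto simp: is_subspace_def)
  have 3: "\<forall>x\<in>\<Inter>?F. \<forall>y\<in>\<Inter>?F. (\<lambda>i. x i + y i) \<in> \<Inter>?F"
  proof (intro ballI InterI)
    fix x y U assume "x \<in> \<Inter>?F" "y \<in> \<Inter>?F" "U \<in> ?F"
    then show "(\<lambda>i. x i + y i) \<in> U" unfolding is_subspace_def by auto
  qed
  have 4: "\<forall>c. \<forall>x\<in>\<Inter>?F. (\<lambda>i. c * x i) \<in> \<Inter>?F"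
  proof (intro allI ballI InterI)
    fix c x U assume "x \<in> \<Inter>?F" "U \<in> ?F"
    then show "(\<lambda>i. c * x i) \<in> U" unfolding is_subspace_def by auto
  qed
  have "is_subspace n (\<Inter>?F)" unfolding is_subspace_def[of n "\<Inter>?F"]
    by (rule conjI[OF 1 conjI[OF 2 conjI[OF 3 4]]])
  thus ?thesis unfolding spanv_def .
qed

lemma spanv_eq:
  assumes "is_subspace n U" "S \<subseteq> U" "\<And>V. is_subspace n V \<Longrightarrow> S \<subseteq> V \<Longrightarrow> U \<subseteq> V"
  shows "spanv n S = U"
proof
  show "spanv n S \<subseteq> U" using assms(1,2) by (rule spanv_least)
  show "U \<subseteq> spanv n S" unfolding spanv_def using assms(3) by (intro Inter_greatest) auto
qed

lemma perp_spanv: assumes "S \<subseteq> vecs n" shows "perp n (spanv n S) = perp n S"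
proof
  show "perp n (spanv n S) \<subseteq> perp n S" using spanv_sup[of S n] unfolding perp_def by auto
next
  show "perp n S \<subseteq> perp n (spanv n S)"
  proof
    fix x assume x: "x \<in> perp n S"
    let ?V = "{u \<in> vecs n. dotp n x u = 0}"
    have "is_subspace n ?V" unfolding is_subspace_def vecs_def
      by (auto simp: dotp_add2 dotp_scale2)
    moreover have "S \<subseteq> ?V" using x assms unfolding perp_def by auto
    ultimately have "spanv n S \<subseteq> ?V" by (rule spanv_least)
    thus "x \<in> perp n (spanv n S)" using x unfolding perp_def by auto
  qed
qed

lemma perp_Un: "perp n (S \<union> T) = perp n S \<inter> perp n T"
  unfolding perp_def by auto

lemma vecs_0: "vecs 0 = {(\<lambda>_. 0)}"
  unfolding vecs_def by auto

lemma vecs_Suc_iff: "x \<in> vecs n \<longleftrightarrow> x \<in> vecs (Suc n) \<and> x n = 0"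
proof
  assume "x \<in> vecs n" thus "x \<in> vecs (Suc n) \<and> x n = 0" unfolding vecs_def by auto
next
  assume a: "x \<in> vecs (Suc n) \<and> x n = 0"
  show "x \<in> vecs n" unfolding vecs_def
  proof (intro CollectI allI impI)
    fix i assume "n \<le> i"
    then have "i = n \<or> Suc n \<le> i" by linarith
    then show "x i = 0" using a unfolding vecs_def by auto
  qed
qed

lemma sep:
  "is_subspace n U \<Longrightarrow> z \<in> vecs n \<Longrightarrow> z \<notin> U \<Longrightarrow>
   \<exists>y\<in>vecs n. (\<forall>u\<in>U. dotp n y u = 0) \<and> dotp n y z \<noteq> 0"
proof (induction n arbitrary: U z)
  case 0
  then have "z = (\<lambda>_. 0)" "(\<lambda>_. 0) \<in> U" unfolding vecs_0 is_subspace_def by simp_all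
  then show ?case using 0 by simp
next
  case (Suc n)
  have subU: "U \<subseteq> vecs (Suc n)" and U0: "(\<lambda>_. 0) \<in> U"
    and Uadd: "\<And>x y. x \<in> U \<Longrightarrow> y \<in> U \<Longrightarrow> (\<lambda>i. x i + y i) \<in> U"
    and Usc: "\<And>c x. x \<in> U \<Longrightarrow> (\<lambda>i. c * x i) \<in> U"
    using Suc.prems(1) unfolding is_subspace_def by simp_all
  show ?case
  proof (cases "\<forall>u\<in>U. u n = 0")
    case True
    have Un: "U \<subseteq> vecs n"
    proof
      fix u assume "u \<in> U" then show "u \<in> vecs n" using vecs_Suc_iff[of u n] True subU by auto
    qed
    show ?thesis
    proof (cases "z n = 0")
      case False
      define y :: "nat \<Rightarrow> 'a" where "y = (\<lambda>i. if i = n then 1 else 0)"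
      have yv: "y \<in> vecs (Suc n)" unfolding y_def vecs_def by auto
      have dy: "dotp (Suc n) y x = x n" for x
        unfolding dotp_Suc by (simp add: y_def dotp_def)
      show ?thesis using yv dy True False by (intro bexI[of _ y]) auto
    next
      case True
      have zn: "z \<in> vecs n" using True Suc.prems(2) vecs_Suc_iff[of z n] by simp
      have "is_subspace n U" using Suc.prems(1) Un unfolding is_subspace_def by auto
      then obtain y where y: "y \<in> vecs n" "\<forall>u\<in>U. dotp n y u = 0" "dotp n y z \<noteq> 0"
        using Suc.IH zn Suc.prems(3) by blast
      have yn: "y n = 0" using y(1) unfolding vecs_def by auto
      show ?thesis
        using y yn vecs_Suc_mono by (intro bexI[of _ y]) (auto simp: dotp_Suc)
    qed
  next
    case False
    then obtain w0 where w0: "w0 \<in> U" "w0 n \<noteq> 0" by auto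
    define w where "w = (\<lambda>i. inverse (w0 n) * w0 i)"
    have wU: "w \<in> U" unfolding w_def using Usc w0 by auto
    have wn: "w n = 1" unfolding w_def using w0 by auto
    define U' where "U' = {u \<in> U. u n = 0}"
    have U'v: "U' \<subseteq> vecs n"
    proof
      fix u assume "u \<in> U'" then show "u \<in> vecs n" using vecs_Suc_iff[of u n] subU unfolding U'_def by auto
    qed
    have sU': "is_subspace n U'" unfolding is_subspace_def
      using U'v U0 Uadd Usc unfolding U'_def by auto
    define z' where "z' = (\<lambda>i. z i - z n * w i)"
    have z'v: "z' \<in> vecs n" unfolding vecs_Suc_iff[of z' n]
      using Suc.prems(2) wU subU wn unfolding z'_def vecs_def by auto
    have z'nU: "z' \<notin> U'"
    proof
      assume "z' \<in> U'"
      then have "(\<lambda>i. z' i + z n * w i) \<in> U" using Uadd Usc wU unfolding U'_def by auto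
      moreover have "(\<lambda>i. z' i + z n * w i) = z" unfolding z'_def by auto
      ultimately show False using Suc.prems(3) by simp
    qed
    obtain y' where y': "y' \<in> vecs n" "\<forall>u\<in>U'. dotp n y' u = 0" "dotp n y' z' \<noteq> 0"
      using Suc.IH[OF sU' z'v z'nU] by blast
    define y where "y = (\<lambda>i. if i = n then - dotp n y' w else y' i)"
    have yv: "y \<in> vecs (Suc n)" using y'(1) unfolding y_def vecs_def by auto
    have dy: "dotp (Suc n) y x = dotp n y' x - dotp n y' w * x n" for x
    proof -
      have "dotp n y x = dotp n y' x" unfolding dotp_def y_def by (intro sum.cong) auto
      thus ?thesis unfolding dotp_Suc by (simp add: y_def)
    qed
    have "\<forall>u\<in>U. dotp (Suc n) y u = 0"
    proof
      fix u assume u: "u \<in> U"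
      have "(\<lambda>i. u i - u n * w i) \<in> U'"
      proof -
        have "(\<lambda>i. u i + (- u n) * w i) \<in> U" by (rule Uadd[OF u Usc[OF wU]])
        thus ?thesis unfolding U'_def using wn by simp
      qed
      then have "dotp n y' (\<lambda>i. u i - u n * w i) = 0" using y'(2) by auto
      then show "dotp (Suc n) y u = 0" unfolding dy dotp_diff2 by (simp add: mult.commute)
    qed
    moreover have "dotp (Suc n) y z \<noteq> 0"
      using y'(3) unfolding dy z'_def dotp_diff2 by (simp add: mult.commute)
    ultimately show ?thesis using yv by blast
  qed
qed

lemma perp_perp:
  assumes "is_subspace n U" shows "perp n (perp n U) = U"
proof
  show "U \<subseteq> perp n (perp n U)"
    using assms unfolding perp_def is_subspace_def by (auto simp: dotp_comm)
  show "perp n (perp n U) \<subseteq> U"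
  proof
    fix z assume z: "z \<in> perp n (perp n U)"
    show "z \<in> U"
    proof (rule ccontr)
      assume "z \<notin> U"
      then obtain y where "y \<in> vecs n" "\<forall>u\<in>U. dotp n y u = 0" "dotp n y z \<noteq> 0"
        using sep[OF assms] z unfolding perp_def by blast
      moreover have "y \<in> perp n U" using calculation unfolding perp_def by auto
      ultimately show False using z unfolding perp_def by (auto simp: dotp_comm)
    qed
  qed
qed

lemma basis_ex: "is_subspace n U \<Longrightarrow> \<exists>bs. is_basis_list n U bs"
proof (induction n arbitrary: U)
  case 0
  then have U: "U = {(\<lambda>_. 0)}" unfolding is_subspace_def vecs_0 by auto
  have "spanv 0 (set []) = U"
  proof (rule spanv_eq)
    show "is_subspace 0 U" by (rule 0)
    show "set [] \<subseteq> U" by simp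
    show "\<And>V. is_subspace 0 V \<Longrightarrow> set [] \<subseteq> V \<Longrightarrow> U \<subseteq> V"
      unfolding U is_subspace_def by simp
  qed
  then show ?case unfolding is_basis_list_def lin_indep_list_def by (intro exI[of _ "[]"]) simp
next
  case (Suc n)
  have subU: "U \<subseteq> vecs (Suc n)" and U0: "(\<lambda>_. 0) \<in> U"
    and Uadd: "\<And>x y. x \<in> U \<Longrightarrow> y \<in> U \<Longrightarrow> (\<lambda>i. x i + y i) \<in> U"
    and Usc: "\<And>c x. x \<in> U \<Longrightarrow> (\<lambda>i. c * x i) \<in> U"
    using Suc.prems(1) unfolding is_subspace_def by simp_all
  show ?case
  proof (cases "\<forall>u\<in>U. u n = 0")
    case True
    have Un: "U \<subseteq> vecs n"
    proof
      fix u assume "u \<in> U" then show "u \<in> vecs n" using vecs_Suc_iff[of u n] True subU by auto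
    qed
    have sUn: "is_subspace n U" using Suc.prems(1) Un unfolding is_subspace_def by simp
    obtain bs where bs: "set bs \<subseteq> vecs n" "lin_indep_list bs" "spanv n (set bs) = U"
      using Suc.IH[OF sUn] unfolding is_basis_list_def by blast
    have bU: "set bs \<subseteq> U" using bs(3) spanv_sup by metis
    have "spanv (Suc n) (set bs) = U"
    proof (rule spanv_eq[OF Suc.prems(1) bU])
      fix V assume V: "is_subspace (Suc n) V" "set bs \<subseteq> V"
      have "is_subspace n (V \<inter> vecs n)" using V(1) vecs_subspace[of n]
        unfolding is_subspace_def by auto
      moreover have "set bs \<subseteq> V \<inter> vecs n" using V(2) bs(1) by auto
      ultimately have "spanv n (set bs) \<subseteq> V \<inter> vecs n" by (rule spanv_least)
      then show "U \<subseteq> V" using bs(3) by auto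
    qed
    moreover have "set bs \<subseteq> vecs (Suc n)" using bs(1) vecs_Suc_mono by auto
    ultimately show ?thesis using bs(2) unfolding is_basis_list_def by blast
  next
    case False
    then obtain w0 where w0: "w0 \<in> U" "w0 n \<noteq> 0" by auto
    define w where "w = (\<lambda>i. inverse (w0 n) * w0 i)"
    have wU: "w \<in> U" unfolding w_def using Usc w0 by auto
    have wn: "w n = 1" unfolding w_def using w0 by auto
    define U' where "U' = {u \<in> U. u n = 0}"
    have U'v: "U' \<subseteq> vecs n"
    proof
      fix u assume "u \<in> U'" then show "u \<in> vecs n" using vecs_Suc_iff[of u n] subU unfolding U'_def by auto
    qed
    have sU': "is_subspace n U'" unfolding is_subspace_def
      using U'v U0 Uadd Usc unfolding U'_def by auto
    obtain bs' where bs': "set bs' \<subseteq> vecs n" "lin_indep_list bs'" "spanv n (set bs') = U'"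
      using Suc.IH[OF sU'] unfolding is_basis_list_def by blast
    have bU': "set bs' \<subseteq> U'" using bs'(3) spanv_sup by metis
    have bn: "\<And>j. j < length bs' \<Longrightarrow> (bs' ! j) n = 0"
      using bU' unfolding U'_def by (auto dest!: nth_mem)
    let ?bs = "w # bs'"
    have setv: "set ?bs \<subseteq> vecs (Suc n)" using wU subU bs'(1) vecs_Suc_mono by auto
    have indep: "lin_indep_list ?bs" unfolding lin_indep_list_def
    proof (intro allI impI)
      fix c :: "nat \<Rightarrow> 'a" and j
      assume h: "(\<lambda>i. \<Sum>j<length ?bs. c j * (?bs ! j) i) = (\<lambda>_. 0)" and j: "j < length ?bs"
      have h2: "c 0 * w i + (\<Sum>j<length bs'. c (Suc j) * (bs' ! j) i) = 0" for i
        using fun_cong[OF h, of i] by (simp only: length_Cons sum.lessThan_Suc_shift nth_Cons_0 nth_Cons_Suc)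
      have c0: "c 0 = 0" using h2[of n] wn bn by simp
      have "(\<lambda>i. \<Sum>j<length bs'. c (Suc j) * (bs' ! j) i) = (\<lambda>_. 0)"
        using h2 c0 by simp
      then have cS: "\<forall>j<length bs'. c (Suc j) = 0"
        using bs'(2)[unfolded lin_indep_list_def, rule_format, of "\<lambda>j. c (Suc j)"] by auto
      show "c j = 0"
      proof (cases j)
        case 0 then show ?thesis using c0 by simp
      next
        case (Suc k) then show ?thesis using cS j by simp
      qed
    qed
    have "spanv (Suc n) (set ?bs) = U"
    proof (rule spanv_eq[OF Suc.prems(1)])
      show "set ?bs \<subseteq> U" using wU bU' unfolding U'_def by auto
      fix V assume V: "is_subspace (Suc n) V" "set ?bs \<subseteq> V"
      have "is_subspace n (V \<inter> vecs n)" using V(1) vecs_subspace[of n]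
        unfolding is_subspace_def by auto
      moreover have "set bs' \<subseteq> V \<inter> vecs n" using V(2) bs'(1) by auto
      ultimately have "spanv n (set bs') \<subseteq> V \<inter> vecs n" by (rule spanv_least)
      then have U'V: "U' \<subseteq> V" using bs'(3) by auto
      have wV: "w \<in> V" using V(2) by auto
      show "U \<subseteq> V"
      proof
        fix u assume u: "u \<in> U"
        have "(\<lambda>i. u i + (- u n) * w i) \<in> U" by (rule Uadd[OF u Usc[OF wU]])
        then have "(\<lambda>i. u i + (- u n) * w i) \<in> U'" unfolding U'_def using wn by simp
        then have a: "(\<lambda>i. u i + (- u n) * w i) \<in> V" using U'V by auto
        have Vadd: "\<And>x y. x \<in> V \<Longrightarrow> y \<in> V \<Longrightarrow> (\<lambda>i. x i + y i) \<in> V"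
          and Vsc: "\<And>c x. x \<in> V \<Longrightarrow> (\<lambda>i. c * x i) \<in> V"
          using V(1) unfolding is_subspace_def by simp_all
        have b: "(\<lambda>i. u n * w i) \<in> V" by (rule Vsc[OF wV])
        have "(\<lambda>i. (u i + (- u n) * w i) + u n * w i) \<in> V"
          by (rule Vadd[OF a b])
        moreover have "(\<lambda>i. (u i + (- u n) * w i) + u n * w i) = u" by auto
        ultimately show "u \<in> V" by simp
      qed
    qed
    then show ?thesis using setv indep unfolding is_basis_list_def by blast
  qed
qed

lemma col_indep_eq:
  assumes bsv: "set bs \<subseteq> vecs n"
  shows "col_indep n bs I = nind n (perp n (spanv n (set bs))) I"
proof
  assume ci: "col_indep n bs I"
  have I: "I \<subseteq> {0..<n}" using ci unfolding col_indep_def by simp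
  show "nind n (perp n (spanv n (set bs))) I" unfolding nind_def
  proof (intro conjI I ballI impI)
    fix x assume x: "x \<in> perp n (spanv n (set bs))" and sx: "\<forall>i. i \<notin> I \<longrightarrow> x i = 0"
    have "\<forall>j<length bs. (\<Sum>i\<in>I. x i * (bs ! j) i) = 0"
    proof (intro allI impI)
      fix j assume j: "j < length bs"
      have "bs ! j \<in> spanv n (set bs)" using spanv_sup j by (metis nth_mem subsetD)
      then have "dotp n x (bs ! j) = 0" using x unfolding perp_def by auto
      moreover have "dotp n x (bs ! j) = (\<Sum>i\<in>I. x i * (bs ! j) i)"
        unfolding dotp_def using I sx by (intro sum.mono_neutral_right) auto
      ultimately show "(\<Sum>i\<in>I. x i * (bs ! j) i) = 0" by simp
    qed
    then have "\<forall>i\<in>I. x i = 0" using ci unfolding col_indep_def by blast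
    then show "x = (\<lambda>_. 0)" using sx by auto
  qed
next
  assume ni: "nind n (perp n (spanv n (set bs))) I"
  have I: "I \<subseteq> {0..<n}" using ni unfolding nind_def by simp
  show "col_indep n bs I" unfolding col_indep_def
  proof (intro conjI I allI impI ballI)
    fix c :: "nat \<Rightarrow> 'a" and i
    assume h: "\<forall>j<length bs. (\<Sum>i\<in>I. c i * (bs ! j) i) = 0" and i: "i \<in> I"
    define x where "x = (\<lambda>i. if i \<in> I then c i else 0)"
    let ?V = "{u \<in> vecs n. (\<Sum>i\<in>I. c i * u i) = 0}"
    have "is_subspace n ?V" unfolding is_subspace_def vecs_def
      by (auto simp: sum.distrib distrib_left mult.left_commute simp flip: sum_distrib_left)
    moreover have "set bs \<subseteq> ?V" using h bsv by (auto simp: in_set_conv_nth)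
    ultimately have sp: "spanv n (set bs) \<subseteq> ?V" by (rule spanv_least)
    have xv: "x \<in> vecs n" using I unfolding x_def vecs_def by auto
    have "x \<in> perp n (spanv n (set bs))" unfolding perp_def
    proof (intro CollectI conjI xv ballI)
      fix u assume "u \<in> spanv n (set bs)"
      then have "(\<Sum>i\<in>I. c i * u i) = 0" using sp by auto
      moreover have "dotp n x u = (\<Sum>i\<in>I. c i * u i)"
        unfolding dotp_def x_def using I by (intro sum.mono_neutral_cong_right) auto
      ultimately show "dotp n x u = 0" by simp
    qed
    moreover have "\<forall>i. i \<notin> I \<longrightarrow> x i = 0" unfolding x_def by auto
    ultimately have "x = (\<lambda>_. 0)" using ni unfolding nind_def by blast
    then show "c i = 0" using i fun_cong[of x "\<lambda>_. 0" i] unfolding x_def by simp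
  qed
qed

lemma matroid_of_eq:
  assumes "is_subspace n U"
  shows "matroid_of n U = nind n (perp n U)"
proof -
  obtain bs where "is_basis_list n U bs" using basis_ex[OF assms] by blast
  then have b: "is_basis_list n U (SOME bs. is_basis_list n U bs)" by (rule someI)
  define bs where "bs = (SOME bs. is_basis_list n U bs)"
  have "set bs \<subseteq> vecs n" "spanv n (set bs) = U" using b unfolding bs_def is_basis_list_def by auto
  then show ?thesis unfolding matroid_of_def bs_def[symmetric] using col_indep_eq by (auto intro!: ext)
qed

lemma nind_mono: "nind n C X \<Longrightarrow> Y \<subseteq> X \<Longrightarrow> nind n C Y"
  unfolding nind_def by blast

lemma fund:
  assumes C: "is_subspace n C" and B: "nind n C B" and j: "j < n" "j \<notin> B"
    and nd: "\<not> nind n C (insert j B)"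
  shows "\<exists>x\<in>C. (\<forall>i. i \<notin> insert j B \<longrightarrow> x i = 0) \<and> x j = 1"
proof -
  have "insert j B \<subseteq> {0..<n}" using B j unfolding nind_def by auto
  then obtain x where x: "x \<in> C" "\<forall>i. i \<notin> insert j B \<longrightarrow> x i = 0" "x \<noteq> (\<lambda>_. 0)"
    using nd unfolding nind_def by blast
  have xj: "x j \<noteq> 0"
  proof
    assume "x j = 0"
    then have "\<forall>i. i \<notin> B \<longrightarrow> x i = 0" using x(2) by auto
    then show False using B x(1,3) unfolding nind_def by blast
  qed
  define y where "y = (\<lambda>i. inverse (x j) * x i)"
  have "y \<in> C" using C x(1) unfolding is_subspace_def y_def by blast
  moreover have "\<forall>i. i \<notin> insert j B \<longrightarrow> y i = 0" using x(2) unfolding y_def by auto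
  moreover have "y j = 1" using xj unfolding y_def by simp
  ultimately show ?thesis by blast
qed

lemma surj:
  assumes C: "is_subspace n C" and J: "nind n C J" and t: "t \<in> vecs n"
  shows "\<exists>y\<in>perp n C. \<forall>j\<in>J. y j = t j"
proof (rule ccontr)
  assume nt: "\<not> ?thesis"
  define V where "V = {w \<in> vecs n. \<exists>y\<in>perp n C. \<forall>j\<in>J. y j = w j}"
  have P0: "(\<lambda>_. 0) \<in> perp n C" and Padd: "\<And>x y. x \<in> perp n C \<Longrightarrow> y \<in> perp n C \<Longrightarrow> (\<lambda>i. x i + y i) \<in> perp n C"
    and Psc: "\<And>c x. x \<in> perp n C \<Longrightarrow> (\<lambda>i. c * x i) \<in> perp n C"
    using perp_subspace[of n C] unfolding is_subspace_def by simp_all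
  have sV: "is_subspace n V" unfolding is_subspace_def
  proof (intro conjI ballI allI)
    show "V \<subseteq> vecs n" unfolding V_def by auto
    show "(\<lambda>_. 0) \<in> V" unfolding V_def vecs_def using P0 by (intro CollectI conjI bexI[of _ "\<lambda>_. 0"]) auto
  next
    fix x y assume "x \<in> V" "y \<in> V"
    then obtain x' y' where "x \<in> vecs n" "y \<in> vecs n" "x' \<in> perp n C" "y' \<in> perp n C"
      "\<forall>j\<in>J. x' j = x j" "\<forall>j\<in>J. y' j = y j" unfolding V_def by blast
    then show "(\<lambda>i. x i + y i) \<in> V" unfolding V_def vecs_def
      by (intro CollectI conjI bexI[of _ "\<lambda>i. x' i + y' i"] Padd) auto
  next
    fix c x assume "x \<in> V"
    then obtain x' where "x \<in> vecs n" "x' \<in> perp n C" "\<forall>j\<in>J. x' j = x j" unfolding V_def by blast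
    then show "(\<lambda>i. c * x i) \<in> V" unfolding V_def vecs_def
      by (intro CollectI conjI bexI[of _ "\<lambda>i. c * x' i"] Psc) auto
  qed
  have "t \<notin> V" using nt unfolding V_def by blast
  then obtain z where z: "z \<in> vecs n" "\<forall>w\<in>V. dotp n z w = 0" "dotp n z t \<noteq> 0"
    using sep[OF sV t] by blast
  have zJ: "\<forall>i. i \<notin> J \<longrightarrow> z i = 0"
  proof (intro allI impI)
    fix k assume k: "k \<notin> J"
    show "z k = 0"
    proof (cases "k < n")
      case False then show ?thesis using z(1) unfolding vecs_def by auto
    next
      case True
      define e where "e = (\<lambda>i. if i = k then (1::'a) else 0)"
      have ev: "e \<in> vecs n" using True unfolding vecs_def e_def by auto
      have "\<exists>y\<in>perp n C. \<forall>j\<in>J. y j = e j"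
        by (rule bexI[of _ "\<lambda>_. 0", OF _ P0]) (use k in \<open>auto simp: e_def\<close>)
      then have "e \<in> V" unfolding V_def using ev by simp
      then have "dotp n z e = 0" using z(2) by auto
      moreover have "dotp n z e = z k * e k" using True by (intro dotp_single) (auto simp: e_def)
      ultimately show ?thesis by (simp add: e_def)
    qed
  qed
  have "\<forall>y\<in>perp n C. dotp n z y = 0"
  proof
    fix y assume y: "y \<in> perp n C"
    have "\<exists>y'\<in>perp n C. \<forall>j\<in>J. y' j = y j" using y by blast
    moreover have "y \<in> vecs n" using y unfolding perp_def by simp
    ultimately have "y \<in> V" unfolding V_def by simp
    then show "dotp n z y = 0" using z(2) by auto
  qed
  then have "z \<in> perp n (perp n C)" unfolding perp_def using z(1) by simp
  then have "z \<in> C" using perp_perp[OF C] by simp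
  then have "z = (\<lambda>_. 0)" using J zJ unfolding nind_def by blast
  then show False using z(3) by simp
qed

lemma core:
  assumes C: "is_subspace n C"
  shows "dual_matroid {0..<n} (nind n C) = nind n (perp n C)"
proof (intro ext iffI)
  fix I assume d: "dual_matroid {0..<n} (nind n C) I"
  then obtain B where IE: "I \<subseteq> {0..<n}" and Bb: "matroid_basis {0..<n} (nind n C) B" and IB: "I \<inter> B = {}"
    unfolding dual_matroid_def by blast
  have BE: "B \<subseteq> {0..<n}" and BI: "nind n C B"
    and Bmax: "\<And>X. X \<subseteq> {0..<n} \<Longrightarrow> nind n C X \<Longrightarrow> B \<subseteq> X \<Longrightarrow> X = B"
    using Bb unfolding matroid_basis_def by auto
  show "nind n (perp n C) I" unfolding nind_def
  proof (intro conjI IE ballI impI)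
    fix y assume y: "y \<in> perp n C" and sy: "\<forall>i. i \<notin> I \<longrightarrow> y i = 0"
    have "y i = 0" for i
    proof (cases "i \<in> I")
      case False then show ?thesis using sy by auto
    next
      case True
      have i: "i < n" "i \<notin> B" using True IE IB by auto
      have "\<not> nind n C (insert i B)"
      proof
        assume "nind n C (insert i B)"
        then have "insert i B = B" using Bmax[of "insert i B"] BE i by auto
        then show False using i by auto
      qed
      then obtain x where x: "x \<in> C" "\<forall>l. l \<notin> insert i B \<longrightarrow> x l = 0" "x i = 1"
        using fund[OF C BI i] by blast
      have "dotp n y x = 0" using y x(1) unfolding perp_def by auto
      moreover have "dotp n y x = y i * x i"
      proof (rule dotp_single[OF i(1)])
        fix l assume "l < n" "l \<noteq> i"
        then show "y l * x l = 0" using sy x(2) IB by (cases "l \<in> I") auto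
      qed
      ultimately show ?thesis using x(3) by simp
    qed
    then show "y = (\<lambda>_. 0)" by auto
  qed
next
  fix I assume ni: "nind n (perp n C) I"
  have IE: "I \<subseteq> {0..<n}" using ni unfolding nind_def by simp
  define S where "S = {0..<n} - I"
  define Fam where "Fam = {B. B \<subseteq> S \<and> nind n C B}"
  have finF: "finite Fam" unfolding Fam_def S_def by (rule finite_subset[of _ "Pow ({0..<n} - I)"]) auto
  have eF: "{} \<in> Fam" unfolding Fam_def nind_def by auto
  define m where "m = Max (card ` Fam)"
  have "m \<in> card ` Fam" unfolding m_def using finF eF by (intro Max_in) auto
  then obtain B where BF: "B \<in> Fam" and cB: "card B = m" by auto
  have mx: "\<And>X. X \<in> Fam \<Longrightarrow> card X \<le> card B" unfolding cB m_def using finF by auto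
  have BS: "B \<subseteq> S" and BI: "nind n C B" using BF unfolding Fam_def by auto
  have finS: "finite S" unfolding S_def by auto
  have maxS: "\<not> nind n C (insert j B)" if j: "j \<in> S" "j \<notin> B" for j
  proof
    assume "nind n C (insert j B)"
    then have "insert j B \<in> Fam" using BS j unfolding Fam_def by auto
    then have "card (insert j B) \<le> card B" by (rule mx)
    moreover have "finite B" using BS finS finite_subset by auto
    ultimately show False using j by simp
  qed
  have "matroid_basis {0..<n} (nind n C) B" unfolding matroid_basis_def
  proof (intro conjI allI impI BI)
    show "B \<subseteq> {0..<n}" using BS unfolding S_def by auto
    fix X assume X: "X \<subseteq> {0..<n} \<and> nind n C X \<and> B \<subseteq> X"
    show "X = B"
    proof (rule ccontr)
      assume "X \<noteq> B"
      then obtain k where k: "k \<in> X" "k \<notin> B" using X by auto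
      have "insert k B \<subseteq> X" using X k by blast
      moreover have "nind n C X" using X by blast
      ultimately have kind: "nind n C (insert k B)" using nind_mono by blast
      have kn: "k < n" using X k by auto
      show False
      proof (cases "k \<in> I")
        case False
        then have "k \<in> S" using kn unfolding S_def by auto
        then show False using maxS k(2) kind by blast
      next
        case True
        define t :: "nat \<Rightarrow> 'a" where "t = (\<lambda>i. if i = k then 1 else 0)"
        have tv: "t \<in> vecs n" using kn unfolding t_def vecs_def by auto
        obtain y where y: "y \<in> perp n C" "\<forall>j\<in>insert k B. y j = t j"
          using surj[OF C kind tv] by blast
        have yk: "y k = 1" using y(2) unfolding t_def by auto
        have yB: "\<And>b. b \<in> B \<Longrightarrow> y b = 0" using y(2) k(2) unfolding t_def by force
        have "\<forall>i. i \<notin> I \<longrightarrow> y i = 0"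
        proof (intro allI impI)
          fix j assume jI: "j \<notin> I"
          show "y j = 0"
          proof (cases "j < n")
            case False then show ?thesis using y(1) unfolding perp_def vecs_def by auto
          next
            case jn: True
            show ?thesis
            proof (cases "j \<in> B")
              case True then show ?thesis by (rule yB)
            next
              case jB: False
              have jS: "j \<in> S" using jn jI unfolding S_def by auto
              obtain x where x: "x \<in> C" "\<forall>l. l \<notin> insert j B \<longrightarrow> x l = 0" "x j = 1"
                using fund[OF C BI jn jB maxS[OF jS jB]] by blast
              have "dotp n y x = 0" using y(1) x(1) unfolding perp_def by auto
              moreover have "dotp n y x = y j * x j"
              proof (rule dotp_single[OF jn])
                fix l assume "l < n" "l \<noteq> j"
                then show "y l * x l = 0" using yB x(2) by (cases "l \<in> B") auto
              qed
              ultimately show ?thesis using x(3) by simp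
            qed
          qed
        qed
        then have "y = (\<lambda>_. 0)" using ni y(1) unfolding nind_def by blast
        then show False using yk by simp
      qed
    qed
  qed
  moreover have "I \<inter> B = {}" using BS unfolding S_def by auto
  ultimately show "dual_matroid {0..<n} (nind n C) I" unfolding dual_matroid_def using IE by blast
qed

theorem theorem12:
  fixes W :: "(nat \<Rightarrow> 'a::field) set" and v :: "nat \<Rightarrow> 'a" and n :: nat
  assumes "is_subspace n W" and "v \<in> vecs n"
  shows "dual_matroid {0..<n} (contract_bullet n W v) = delete_bullet n (perp n W) v"
proof -
  define A where "A = W \<inter> perp n (spanv n {v})"
  have pv: "perp n (spanv n {v}) = perp n {v}" using assms(2) by (intro perp_spanv) auto
  have sA: "is_subspace n A" unfolding A_def pv
    using assms(1) perp_subspace[of n "{v}"] unfolding is_subspace_def by auto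
  have Wv: "W \<subseteq> vecs n" using assms(1) unfolding is_subspace_def by simp
  have pWv: "perp n W \<union> {v} \<subseteq> vecs n" using assms(2) unfolding perp_def by auto
  define B where "B = spanv n (perp n W \<union> {v})"
  have sB: "is_subspace n B" unfolding B_def by (rule spanv_subspace[OF pWv])
  have pB: "perp n B = A" unfolding B_def A_def perp_spanv[OF pWv] perp_Un pv perp_perp[OF assms(1)] ..
  have "contract_bullet n W v = nind n (perp n A)"
    unfolding contract_bullet_def A_def[symmetric] by (rule matroid_of_eq[OF sA])
  moreover have "delete_bullet n (perp n W) v = nind n A"
    unfolding delete_bullet_def B_def[symmetric] matroid_of_eq[OF sB] pB ..
  moreover have "dual_matroid {0..<n} (nind n (perp n A)) = nind n (perp n (perp n A))"
    by (rule core[OF perp_subspace])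
  ultimately show ?thesis using perp_perp[OF sA] by simp
qed

end
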